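(* Let $A,B,C \subset \mathbb{R}$ be finite sets such that $|A| \approx |C|$. Then $$\sum_{a \in A} E^{\times}(B,C-a) \ll E^{\times}(B)^{1/2}|A|^2\log^{1/2}|A|+|A|^3+|A||B|^2,$$ where the implied constant depends only on the implied constants in $|A|\approx|C|$.
   Context: For finite $X,Y\subset\mathbb{R}$, the multiplicative energy $E^{\times}(X,Y)$ is the number of solutions of $\frac{x_1}{y_1}=\frac{x_2}{y_2}$ with $x_1,x_2\in X$, $y_1,y_2\in Y$; $E^\times(X)=E^\times(X,X)$. $C-a=\{c-a: c\in C\}$. $X\ll Y$ means $X\le cY$ for a constant $c>0$; $X\approx Y$ means both $X\ll Y$ and $Y\ll X$. Logarithms are base 2. *)

theory Defs
  imports Complex_Main
begin

text \<open>Multiplicative energy: number of solutions of x1/y1 = x2/y2 with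
  x1,x2 in X and y1,y2 in Y; quotients only make sense for nonzero y.\<close>
definition mult_energy :: "real set \<Rightarrow> real set \<Rightarrow> nat" where
  "mult_energy X Y = card {(x1, x2, y1, y2). x1 \<in> X \<and> x2 \<in> X \<and> y1 \<in> Y \<and> y2 \<in> Y
      \<and> y1 \<noteq> 0 \<and> y2 \<noteq> 0 \<and> x1 / y1 = x2 / y2}"

end

theory Submission
  imports Defs "HOL-Analysis.Analysis"
begin
definition XL :: "real set \<Rightarrow> real \<Rightarrow> real \<Rightarrow> real set" where
  "XL D s b = {x\<in>D. s*x+b \<in> D}"
definition nxt :: "real set \<Rightarrow> real \<Rightarrow> real" where
  "nxt X x = Min {y\<in>X. x < y}"
definition gp :: "real set \<Rightarrow> real \<Rightarrow> real \<Rightarrow> nat" where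
  "gp D u v = card {d\<in>D. min u v \<le> d \<and> d < max u v}"

lemma nxt_props:
  assumes "finite X" "x \<in> X" "x \<noteq> Max X"
  shows "nxt X x \<in> X" "x < nxt X x" "\<And>y. y \<in> X \<Longrightarrow> x < y \<Longrightarrow> nxt X x \<le> y"
proof -
  have "x \<le> Max X" using assms by simp
  hence "x < Max X" using assms(3) by linarith
  moreover have "Max X \<in> X" using assms by (intro Max_in) auto
  ultimately have ne: "{y\<in>X. x < y} \<noteq> {}" by auto
  have fin: "finite {y\<in>X. x < y}" using assms by auto
  have "nxt X x \<in> {y\<in>X. x < y}" unfolding nxt_def using Min_in[OF fin ne] .
  thus "nxt X x \<in> X" "x < nxt X x" by auto
  fix y assume "y \<in> X" "x < y"
  thus "nxt X x \<le> y" unfolding nxt_def using fin by (intro Min_le) auto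
qed

lemma gap_sum:
  assumes "finite D" "finite X"
    and mono: "(\<forall>u\<in>X. \<forall>v\<in>X. u < v \<longrightarrow> h u < h v) \<or> (\<forall>u\<in>X. \<forall>v\<in>X. u < v \<longrightarrow> h v < h u)"
  shows "(\<Sum>x\<in>X - {Max X}. gp D (h x) (h (nxt X x))) \<le> card D"
proof -
  define I where "I x = {d\<in>D. min (h x) (h (nxt X x)) \<le> d \<and> d < max (h x) (h (nxt X x))}" for x
  have key: "I x \<inter> I y = {}" if xy: "x \<in> X - {Max X}" "y \<in> X - {Max X}" "x < y" for x y
  proof -
    have p1: "nxt X x \<in> X" "x < nxt X x" "nxt X x \<le> y" using nxt_props[OF assms(2), of x] xy by auto
    have p2: "nxt X y \<in> X" "y < nxt X y" using nxt_props[OF assms(2), of y] xy by auto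
    have hle: "h (nxt X x) = h y \<or> nxt X x < y" using p1 by auto
    from mono show ?thesis
    proof
      assume inc: "\<forall>u\<in>X. \<forall>v\<in>X. u < v \<longrightarrow> h u < h v"
      have "h x < h (nxt X x)" "h (nxt X x) \<le> h y" "h y < h (nxt X y)"
        using inc p1 p2 xy hle by (auto, meson less_le)
      thus ?thesis unfolding I_def by (auto simp: min_def max_def)
    next
      assume dec: "\<forall>u\<in>X. \<forall>v\<in>X. u < v \<longrightarrow> h v < h u"
      have "h (nxt X x) < h x" "h y \<le> h (nxt X x)" "h (nxt X y) < h y"
        using dec p1 p2 xy hle by (auto, meson less_le)
      thus ?thesis unfolding I_def by (auto simp: min_def max_def)
    qed
  qed
  have disj: "\<forall>x\<in>X - {Max X}. \<forall>y\<in>X - {Max X}. x \<noteq> y \<longrightarrow> I x \<inter> I y = {}"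
  proof (intro ballI impI)
    fix x y assume "x \<in> X - {Max X}" "y \<in> X - {Max X}" "x \<noteq> y"
    thus "I x \<inter> I y = {}" using key[of x y] key[of y x] by (cases "x < y") (auto simp: Int_commute)
  qed
  have "(\<Sum>x\<in>X - {Max X}. gp D (h x) (h (nxt X x))) = (\<Sum>x\<in>X - {Max X}. card (I x))"
    unfolding gp_def I_def by simp
  also have "\<dots> = card (\<Union>x\<in>X - {Max X}. I x)"
    using disj assms by (subst card_UN_disjoint) (auto simp: I_def)
  also have "\<dots> \<le> card D" using assms(1) by (intro card_mono) (auto simp: I_def)
  finally show ?thesis .
qed

lemma gp_sym: "gp D u v = gp D v u"
  unfolding gp_def by (simp add: min.commute max.commute)

lemma card_V:
  assumes "finite D" "u \<in> D"
  shows "card {v\<in>D. u < v \<and> gp D u v \<le> g} \<le> g"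
proof -
  let ?V = "{v\<in>D. u < v \<and> gp D u v \<le> g}"
  have inj: "inj_on (gp D u) ?V"
  proof (rule linorder_inj_onI')
    fix v v' assume "v \<in> ?V" "v' \<in> ?V" "v < v'"
    hence "{d\<in>D. min u v \<le> d \<and> d < max u v} \<subseteq> {d\<in>D. min u v' \<le> d \<and> d < max u v'}"
      "v \<in> {d\<in>D. min u v' \<le> d \<and> d < max u v'}" "v \<notin> {d\<in>D. min u v \<le> d \<and> d < max u v}"
      by auto
    hence "{d\<in>D. min u v \<le> d \<and> d < max u v} \<subset> {d\<in>D. min u v' \<le> d \<and> d < max u v'}"
      by blast
    hence "gp D u v < gp D u v'" unfolding gp_def using assms(1) by (intro psubset_card_mono) auto
    thus "gp D u v \<noteq> gp D u v'" by simp
  qed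
  have sub: "gp D u ` ?V \<subseteq> {1..g}"
  proof
    fix k assume "k \<in> gp D u ` ?V"
    then obtain v where v: "v \<in> ?V" "k = gp D u v" by auto
    have "u \<in> {d\<in>D. min u v \<le> d \<and> d < max u v}" using v assms by auto
    hence "gp D u v \<noteq> 0" unfolding gp_def using assms(1) by auto
    thus "k \<in> {1..g}" using v by auto
  qed
  have "card ?V = card (gp D u ` ?V)" using inj by (simp add: card_image)
  also have "\<dots> \<le> card {1..g}" using sub by (intro card_mono) auto
  finally show ?thesis by simp
qed

lemma pairs_lt:
  assumes "finite D"
  shows "card {(u,v). u\<in>D \<and> v\<in>D \<and> u<v \<and> gp D u v \<le> g} \<le> card D * g"
proof -
  have eq: "{(u,v). u\<in>D \<and> v\<in>D \<and> u<v \<and> gp D u v \<le> g} = Sigma D (\<lambda>u. {v\<in>D. u < v \<and> gp D u v \<le> g})"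
    by auto
  have "card (Sigma D (\<lambda>u. {v\<in>D. u < v \<and> gp D u v \<le> g})) = (\<Sum>u\<in>D. card {v\<in>D. u < v \<and> gp D u v \<le> g})"
    using assms by (intro card_SigmaI) auto
  also have "\<dots> \<le> (\<Sum>u\<in>D. g)" using card_V[OF assms] by (intro sum_mono) auto
  finally show ?thesis using eq by simp
qed

lemma pairs_ne:
  assumes "finite D"
  shows "card {(u,v). u\<in>D \<and> v\<in>D \<and> u\<noteq>v \<and> gp D u v \<le> g} \<le> 2 * card D * g"
proof -
  let ?P = "{(u,v). u\<in>D \<and> v\<in>D \<and> u<v \<and> gp D u v \<le> g}"
  have fin: "finite ?P" by (rule finite_subset[of _ "D \<times> D"]) (use assms in auto)
  have sub: "{(u,v). u\<in>D \<and> v\<in>D \<and> u\<noteq>v \<and> gp D u v \<le> g} \<subseteq> ?P \<union> (\<lambda>(u,v). (v,u)) ` ?P"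
  proof
    fix p assume "p \<in> {(u,v). u\<in>D \<and> v\<in>D \<and> u\<noteq>v \<and> gp D u v \<le> g}"
    then obtain u v where p: "p = (u,v)" "u\<in>D" "v\<in>D" "u\<noteq>v" "gp D u v \<le> g" by auto
    show "p \<in> ?P \<union> (\<lambda>(u,v). (v,u)) ` ?P"
    proof (cases "u < v")
      case True thus ?thesis using p by auto
    next
      case False
      hence "(v,u) \<in> ?P" using p gp_sym[of D u v] by auto
      hence "(u,v) \<in> (\<lambda>(u,v). (v,u)) ` ?P" by force
      thus ?thesis using p by auto
    qed
  qed
  have "card {(u,v). u\<in>D \<and> v\<in>D \<and> u\<noteq>v \<and> gp D u v \<le> g} \<le> card (?P \<union> (\<lambda>(u,v). (v,u)) ` ?P)"
    using fin by (intro card_mono[OF _ sub]) auto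
  also have "\<dots> \<le> card ?P + card ((\<lambda>(u,v). (v,u)) ` ?P)" by (rule card_Un_le)
  also have "\<dots> \<le> card ?P + card ?P" using card_image_le[OF fin] by simp
  also have "\<dots> \<le> 2 * card D * g" using pairs_lt[OF assms, of g] by simp
  finally show ?thesis .
qed

definition Lj :: "real set \<Rightarrow> nat \<Rightarrow> (real \<times> real) set" where
  "Lj D j = {(s,b). s \<noteq> 0 \<and> j \<le> card (XL D s b)}"

lemma two_elems:
  assumes "2 \<le> card S"
  obtains x y where "x \<in> S" "y \<in> S" "x < (y::real)"
proof -
  have fin: "finite S"
  proof (rule ccontr)
    assume "infinite S" hence "card S = 0" by simp
    with assms show False by simp
  qed
  have "S \<noteq> {}" using assms by auto
  then obtain x where x: "x \<in> S" by auto
  have c1: "card (S - {x}) \<ge> 1" using assms x fin by (simp add: card_Diff_singleton)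
  have "S - {x} \<noteq> {}"
  proof
    assume "S - {x} = {}"
    with c1 show False by simp
  qed
  then obtain y where y: "y \<in> S" "y \<noteq> x" by auto
  show ?thesis
  proof (cases "x < y")
    case True thus ?thesis using that x y by blast
  next
    case False hence "y < x" using y by auto
    thus ?thesis using that x y by blast
  qed
qed

lemma finite_XL: "finite D \<Longrightarrow> finite (XL D s b)"
  unfolding XL_def by auto

lemma card_XL: "finite D \<Longrightarrow> card (XL D s b) \<le> card D"
  unfolding XL_def by (intro card_mono) auto

lemma lines_fin:
  assumes "finite D" "2 \<le> j"
  shows "finite (Lj D j)" "card (Lj D j) \<le> card D ^ 4"
proof -
  define F where "F = (\<lambda>(x::real,x'::real,y::real,y'::real). ((y'-y)/(x'-x), y - (y'-y)/(x'-x)*x))"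
  have sub: "Lj D j \<subseteq> F ` (D \<times> D \<times> D \<times> D)"
  proof
    fix p assume "p \<in> Lj D j"
    then obtain s b where p: "p = (s,b)" "s \<noteq> 0" "j \<le> card (XL D s b)" unfolding Lj_def by auto
    have "2 \<le> card (XL D s b)" using p assms(2) by linarith
    then obtain x x' where xx: "x \<in> XL D s b" "x' \<in> XL D s b" "x < x'"
      by (rule two_elems)
    have e: "((s*x'+b) - (s*x+b))/(x'-x) = s" using xx by (simp add: field_simps)
    have "F (x,x',s*x+b,s*x'+b) = (s,b)" unfolding F_def prod.case e by simp
    moreover have "(x,x',s*x+b,s*x'+b) \<in> D \<times> D \<times> D \<times> D" using xx unfolding XL_def by auto
    ultimately show "p \<in> F ` (D \<times> D \<times> D \<times> D)" using p by force
  qed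
  show "finite (Lj D j)" by (rule finite_subset[OF sub]) (use assms(1) in auto)
  have "card (Lj D j) \<le> card (F ` (D \<times> D \<times> D \<times> D))" using sub assms(1) by (intro card_mono) auto
  also have "\<dots> \<le> card (D \<times> D \<times> D \<times> D)" by (rule card_image_le) (use assms(1) in auto)
  also have "\<dots> = card D ^ 4" by (simp add: card_cartesian_product power4_eq_xxxx)
  finally show "card (Lj D j) \<le> card D ^ 4" .
qed

lemma rich:
  assumes "finite D" "2 \<le> j"
  shows "real (card (Lj D j)) * (real j - 1 - 2 * real (card D) / (real g + 1)) \<le> 2 * real (card D)^2 * real g^2"
proof -
  define N where "N = card D"
  define L where "L = Lj D j"
  have finL: "finite L" using lines_fin assms L_def by auto
  define X where "X p = XL D (fst p) (snd p)" for p
  define G where "G p = {x \<in> X p - {Max (X p)}. gp D x (nxt (X p) x) \<le> g \<and>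
      gp D (fst p * x + snd p) (fst p * nxt (X p) x + snd p) \<le> g}" for p
  have finG: "finite (G p)" for p unfolding G_def X_def using finite_XL[OF assms(1)] by auto
  have lowG: "real (card (G p)) \<ge> real j - 1 - 2 * real N / (real g + 1)" if "p \<in> L" for p
  proof -
    obtain s b where p: "p = (s,b)" by (cases p)
    have s0: "s \<noteq> 0" and jk: "j \<le> card (XL D s b)" using that p unfolding L_def Lj_def by auto
    let ?X = "XL D s b"
    let ?X' = "?X - {Max ?X}"
    have finX: "finite ?X" using finite_XL assms(1) by auto
    have neX: "?X \<noteq> {}" using jk assms(2) by auto
    have MX: "Max ?X \<in> ?X" using finX neX by (intro Max_in)
    have cX': "card ?X' = card ?X - 1" using finX MX by (simp add: card_Diff_singleton)
    define Bx where "Bx = {x\<in>?X'. g < gp D x (nxt ?X x)}"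
    define By where "By = {x\<in>?X'. g < gp D (s*x+b) (s*nxt ?X x+b)}"
    have Geq: "G p = ?X' - (Bx \<union> By)" unfolding G_def X_def Bx_def By_def p by auto
    have finX': "finite ?X'" using finX by auto
    have cnt: "card ?X' \<le> card (G p) + card Bx + card By"
    proof -
      have "card ?X' \<le> card ((?X' - (Bx \<union> By)) \<union> (Bx \<union> By))"
        by (intro card_mono) (use finX' in \<open>auto simp: Bx_def By_def\<close>)
      also have "\<dots> \<le> card (?X' - (Bx \<union> By)) + card (Bx \<union> By)" by (rule card_Un_le)
      also have "card (Bx \<union> By) \<le> card Bx + card By" by (rule card_Un_le)
      finally show ?thesis using Geq by simp
    qed
    have sx: "card Bx * (g+1) \<le> N"
    proof -
      have "card Bx * (g+1) = (\<Sum>x\<in>Bx. g+1)" by simp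
      also have "\<dots> \<le> (\<Sum>x\<in>Bx. gp D x (nxt ?X x))" by (intro sum_mono) (auto simp: Bx_def)
      also have "\<dots> \<le> (\<Sum>x\<in>?X'. gp D x (nxt ?X x))"
        by (intro sum_mono2) (use finX' in \<open>auto simp: Bx_def\<close>)
      also have "\<dots> \<le> N" using gap_sum[OF assms(1) finX, of "\<lambda>x. x"] N_def by simp
      finally show ?thesis .
    qed
    have mono: "(\<forall>u\<in>(?X). \<forall>v\<in>(?X). u < v \<longrightarrow> s * u + b < s * v + b) \<or> (\<forall>u\<in>(?X). \<forall>v\<in>(?X). u < v \<longrightarrow> s * v + b < s * u + b)"
    proof (cases "s > 0")
      case True
      hence "\<forall>u\<in>(?X). \<forall>v\<in>(?X). u < v \<longrightarrow> s * u + b < s * v + b" by (auto intro: mult_strict_left_mono)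
      thus ?thesis by blast
    next
      case False
      hence "s < 0" using s0 by auto
      hence "\<forall>u\<in>(?X). \<forall>v\<in>(?X). u < v \<longrightarrow> s * v + b < s * u + b" by (auto intro: mult_strict_left_mono_neg)
      thus ?thesis by blast
    qed
    have sy: "card By * (g+1) \<le> N"
    proof -
      have "card By * (g+1) = (\<Sum>x\<in>By. g+1)" by simp
      also have "\<dots> \<le> (\<Sum>x\<in>By. gp D (s*x+b) (s*nxt ?X x+b))" by (intro sum_mono) (auto simp: By_def)
      also have "\<dots> \<le> (\<Sum>x\<in>?X'. gp D (s*x+b) (s*nxt ?X x+b))"
        by (intro sum_mono2) (use finX' in \<open>auto simp: By_def\<close>)
      also have "\<dots> \<le> N" using gap_sum[OF assms(1) finX mono] N_def by simp
      finally show ?thesis .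
    qed
    have rx: "real (card Bx) \<le> real N / (real g + 1)" using sx
      by (simp add: field_simps) (metis of_nat_add of_nat_le_iff of_nat_mult of_nat_1)
    have ry: "real (card By) \<le> real N / (real g + 1)" using sy
      by (simp add: field_simps) (metis of_nat_add of_nat_le_iff of_nat_mult of_nat_1)
    have "real j - 1 \<le> real (card ?X')" using cX' jk assms(2) by simp
    also have "\<dots> \<le> real (card (G p)) + real (card Bx) + real (card By)" using cnt by linarith
    finally show ?thesis using rx ry by linarith
  qed
  define Px where "Px = {(u,v). u\<in>D \<and> v\<in>D \<and> u<v \<and> gp D u v \<le> g}"
  define Py where "Py = {(u,v). u\<in>D \<and> v\<in>D \<and> u\<noteq>v \<and> gp D u v \<le> g}"
  define Phi where "Phi = (\<lambda>(p::real\<times>real, x::real). ((x, nxt (X p) x), (fst p * x + snd p, fst p * nxt (X p) x + snd p)))"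
  have inj: "inj_on Phi (Sigma L G)"
  proof (rule inj_onI)
    fix q q' assume q: "q \<in> Sigma L G" "q' \<in> Sigma L G" "Phi q = Phi q'"
    obtain s b x where qq: "q = ((s,b),x)" by (metis prod.collapse)
    obtain s' b' x' where qq': "q' = ((s',b'),x')" by (metis prod.collapse)
    have xG: "x \<in> G (s,b)" using q(1) qq by auto
    let ?X = "XL D s b"
    have xX: "x \<in> ?X - {Max ?X}" using xG unfolding G_def X_def by auto
    have finX: "finite ?X" using finite_XL assms(1) by auto
    define v where "v = nxt ?X x"
    have xv: "x < v" using nxt_props[OF finX, of x] xX v_def by auto
    have e: "x = x'" "v = nxt (X (s',b')) x'" "s*x+b = s'*x'+b'" "s * v + b = s' * v + b'"
      using q(3) unfolding qq qq' Phi_def v_def X_def by auto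
    have "(s - s') * (v - x) = 0" using e by (simp add: algebra_simps)
    hence "s = s'" using xv by simp
    hence "b = b'" using e by simp
    thus "q = q'" using qq qq' e \<open>s = s'\<close> by simp
  qed
  have img: "Phi ` Sigma L G \<subseteq> Px \<times> Py"
  proof
    fix r assume "r \<in> Phi ` Sigma L G"
    then obtain s b x where sb: "(s,b) \<in> L" "x \<in> G (s,b)" "r = Phi ((s,b),x)" by auto
    let ?X = "XL D s b"
    have s0: "s \<noteq> 0" using sb unfolding L_def Lj_def by auto
    have xX: "x \<in> ?X - {Max ?X}" using sb unfolding G_def X_def by auto
    have finX: "finite ?X" using finite_XL assms(1) by auto
    define v where "v = nxt ?X x"
    have xv: "x < v" "v \<in> ?X" using nxt_props[OF finX, of x] xX v_def by auto
    have gg: "gp D x v \<le> g" "gp D (s*x+b) (s * v + b) \<le> g" using sb(2) unfolding G_def X_def v_def by auto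
    have ne: "s*x+b \<noteq> s * v + b" using s0 xv by simp
    have "x \<in> D" "v \<in> D" "s*x+b \<in> D" "s * v + b \<in> D" using xX xv unfolding XL_def by auto
    thus "r \<in> Px \<times> Py" using sb(3) xv gg ne unfolding Phi_def Px_def Py_def X_def v_def by auto
  qed
  have finPx: "finite Px" unfolding Px_def by (rule finite_subset[of _ "D \<times> D"]) (use assms(1) in auto)
  have finPy: "finite Py" unfolding Py_def by (rule finite_subset[of _ "D \<times> D"]) (use assms(1) in auto)
  have "card (Sigma L G) = card (Phi ` Sigma L G)" using inj by (simp add: card_image)
  also have "\<dots> \<le> card (Px \<times> Py)" using img finPx finPy by (intro card_mono) auto
  also have "\<dots> = card Px * card Py" by (rule card_cartesian_product)
  also have "\<dots> \<le> (N * g) * (2 * N * g)"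
    using pairs_lt[OF assms(1), of g] pairs_ne[OF assms(1), of g] N_def Px_def Py_def
    by (intro mult_mono) auto
  finally have S1: "card (Sigma L G) \<le> (N * g) * (2 * N * g)" .
  have "card (Sigma L G) = (\<Sum>p\<in>L. card (G p))" using finL finG by (intro card_SigmaI) auto
  hence "real (card L) * (real j - 1 - 2 * real N / (real g + 1)) \<le> real (card (Sigma L G))"
    using lowG sum_mono[of L "\<lambda>p. real j - 1 - 2 * real N / (real g + 1)" "\<lambda>p. real (card (G p))"]
    by (simp add: mult.commute)
  also have "\<dots> \<le> real ((N * g) * (2 * N * g))" using S1 by linarith
  also have "\<dots> = 2 * real N^2 * real g^2" by (simp add: power2_eq_square)
  finally show ?thesis unfolding L_def N_def .
qed

lemma harm_bound: "n \<ge> 1 \<Longrightarrow> (\<Sum>j\<in>{1..n}. 1 / real j) \<le> 1 + ln (real n)"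
proof (induction n rule: dec_induct)
  case base thus ?case by simp
next
  case (step n)
  have n1: "real n \<ge> 1" using step by simp
  have "ln (real n / (real n + 1)) \<le> real n / (real n + 1) - 1"
    using n1 by (intro ln_le_minus_one) simp
  also have "\<dots> = - 1 / (real n + 1)" using n1 by (simp add: field_simps)
  finally have l: "ln (real n / (real n + 1)) \<le> - 1 / (real n + 1)" .
  have "ln (real n / (real n + 1)) = ln (real n) - ln (real n + 1)" using n1 by (intro ln_divide_pos) auto
  with l have l2: "1 / (real n + 1) \<le> ln (real n + 1) - ln (real n)" by simp
  have "(\<Sum>j\<in>{1..Suc n}. 1 / real j) = (\<Sum>j\<in>{1..n}. 1 / real j) + 1 / (real n + 1)"
    by (simp add: add.commute)
  also have "\<dots> \<le> 1 + ln (real n) + (ln (real n + 1) - ln (real n))" using step.IH l2 by linarith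
  also have "\<dots> = 1 + ln (real (Suc n))" by (simp add: add.commute)
  finally show ?case .
qed

lemma cube_bound: "real k ^ 3 \<le> (\<Sum>j\<in>{1..k}. 3 * real j ^ 2)"
proof (induction k)
  case 0 thus ?case by simp
next
  case (Suc k)
  have "real (Suc k) ^ 3 = real k ^ 3 + (3 * real k ^ 2 + 3 * real k + 1)" by (simp add: power3_eq_cube power2_eq_square algebra_simps)
  also have "\<dots> \<le> (\<Sum>j\<in>{1..k}. 3 * real j ^ 2) + 3 * real (Suc k) ^ 2"
    using Suc by (simp add: power2_eq_square algebra_simps)
  also have "\<dots> = (\<Sum>j\<in>{1..Suc k}. 3 * real j ^ 2)" by simp
  finally show ?case .
qed

lemma rich2:
  assumes "finite D" "1 \<le> j"
  shows "real (card (Lj D (max 2 j))) \<le> 800 * real (card D) ^ 4 / real j ^ 3"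
proof (cases "j \<le> 1")
  case True
  hence "j = 1" using assms by simp
  have "card (Lj D 2) \<le> card D ^ 4" using lines_fin(2)[OF assms(1), of 2] by simp
  hence "real (card (Lj D 2)) \<le> real (card D) ^ 4" by (metis of_nat_le_iff of_nat_power)
  also have "\<dots> \<le> 800 * real (card D) ^ 4" by simp
  finally have X: "real (card (Lj D 2)) \<le> 800 * real (card D) ^ 4" .
  have m2: "max 2 j = 2" and j3: "real j ^ 3 = 1" using \<open>j = 1\<close> by auto
  show ?thesis unfolding m2 j3 using X by simp
next
  case False
  hence j2: "2 \<le> j" by simp
  hence mj: "max 2 j = j" by simp
  define N where "N = real (card D)"
  show ?thesis
  proof (cases "j \<le> card D")
    case False
    have "Lj D j = {}" unfolding Lj_def using card_XL[OF assms(1)] False by (auto, meson le_trans)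
    thus ?thesis using mj by simp
  next
    case True
    define t where "t = real j - 1"
    have t1: "1 \<le> t" using j2 t_def by simp
    have tN: "t \<le> N" using True t_def N_def by simp
    define g where "g = nat \<lceil>4 * N / t\<rceil>"
    define G where "G = real g"
    have Gl: "4 * N / t \<le> G" unfolding G_def g_def by linarith
    have Gu: "G \<le> 4 * N / t + 1" unfolding G_def g_def using t1 tN by (simp add: ceiling_le_iff)
    have Npos: "N \<ge> 1" using t1 tN by simp
    have Nt: "1 \<le> N / t" using t1 tN by simp
    have Gu2: "G \<le> 5 * N / t" using Gu Nt by simp
    have G4: "4 \<le> G" using Gl Nt by simp
    have r: "real (card (Lj D j)) * (t - 2 * N / (G + 1)) \<le> 2 * N^2 * G^2"
      using rich[OF assms(1) j2, of g] unfolding t_def N_def G_def by simp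
    have h1: "2 * N / (G + 1) \<le> 2 * N / G" using G4 Npos by (intro divide_left_mono) auto
    have h2: "2 * N / G \<le> t / 2"
    proof -
      have "t * G \<ge> 4 * N" using Gl t1 by (simp add: field_simps)
      thus ?thesis using G4 t1 by (simp add: field_simps)
    qed
    have fac: "t / 2 \<le> t - 2 * N / (G + 1)" using h1 h2 by linarith
    have "real (card (Lj D j)) * (t / 2) \<le> real (card (Lj D j)) * (t - 2 * N / (G + 1))"
      using fac by (intro mult_left_mono) auto
    also have "\<dots> \<le> 2 * N^2 * G^2" by (rule r)
    also have "\<dots> \<le> 2 * N^2 * (5 * N / t)^2" using Gu2 G4 by (intro mult_left_mono power_mono) auto
    also have "\<dots> = 50 * N^4 / t^2" using t1 by (simp add: field_simps power2_eq_square power4_eq_xxxx)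
    finally have c1: "real (card (Lj D j)) * (t / 2) \<le> 50 * N^4 / t^2" .
    hence c2: "real (card (Lj D j)) \<le> 100 * N^4 / t^3" using t1 by (simp add: field_simps power2_eq_square power3_eq_cube)
    have jt: "real j \<le> 2 * t" using t_def t1 by simp
    have "real j ^ 3 \<le> (2 * t) ^ 3" using jt by (intro power_mono) auto
    hence j3: "real j ^ 3 \<le> 8 * t ^ 3" by (simp add: power3_eq_cube)
    have kk: "N ^ 4 * real j ^ 3 \<le> 8 * (t ^ 3 * N ^ 4)"
      using mult_left_mono[OF j3, of "N^4"] by (simp add: algebra_simps)
    have "100 * N^4 / t^3 \<le> 800 * N^4 / real j ^ 3"
      using kk t1 j2 by (simp add: field_simps)
    thus ?thesis using c2 mj unfolding N_def by simp
  qed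
qed

lemma harm_bound0: "(\<Sum>j\<in>{1..n}. 1 / real j) \<le> 1 + ln (real n)"
  using harm_bound[of n] by (cases "n = 0") auto

lemma sum_cubes:
  assumes "finite D"
  shows "(\<Sum>p\<in>Lj D 2. real (card (XL D (fst p) (snd p))) ^ 3)
           \<le> 2400 * real (card D)^4 * (1 + ln (real (card D)))"
proof -
  define N where "N = card D"
  define L where "L = Lj D 2"
  define k where "k p = card (XL D (fst p) (snd p))" for p
  have finL: "finite L" using lines_fin(1)[OF assms(1)] L_def by simp
  have kN: "k p \<le> N" for p using card_XL[OF assms(1)] k_def N_def by simp
  have step1: "real (k p) ^ 3 \<le> (\<Sum>j\<in>{1..N}. if j \<le> k p then 3 * real j ^ 2 else 0)" for p
  proof -
    have "{j\<in>{1..N}. j \<le> k p} = {1..k p}" using kN[of p] by auto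
    hence "(\<Sum>j\<in>{1..N}. if j \<le> k p then 3 * real j ^ 2 else 0) = (\<Sum>j\<in>{1..k p}. 3 * real j ^ 2)"
      using sum.inter_filter[of "{1..N}" "\<lambda>j. 3 * real j ^ 2" "\<lambda>j. j \<le> k p"] by simp
    thus ?thesis using cube_bound[of "k p"] by simp
  qed
  have setj: "{p\<in>L. j \<le> k p} = Lj D (max 2 j)" for j
    unfolding L_def Lj_def k_def by auto
  have "(\<Sum>p\<in>L. real (k p) ^ 3) \<le> (\<Sum>p\<in>L. \<Sum>j\<in>{1..N}. if j \<le> k p then 3 * real j ^ 2 else 0)"
    by (intro sum_mono step1)
  also have "\<dots> = (\<Sum>j\<in>{1..N}. \<Sum>p\<in>L. if j \<le> k p then 3 * real j ^ 2 else 0)"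
    by (rule sum.swap)
  also have "\<dots> = (\<Sum>j\<in>{1..N}. 3 * real j ^ 2 * real (card (Lj D (max 2 j))))"
  proof (intro sum.cong refl)
    fix j
    have "(\<Sum>p\<in>L. if j \<le> k p then 3 * real j ^ 2 else 0) = (\<Sum>p\<in>{p\<in>L. j \<le> k p}. 3 * real j ^ 2)"
      using sum.inter_filter[OF finL, of "\<lambda>p. 3 * real j ^ 2" "\<lambda>p. j \<le> k p"] by simp
    also have "\<dots> = 3 * real j ^ 2 * real (card (Lj D (max 2 j)))" unfolding setj by simp
    finally show "(\<Sum>p\<in>L. if j \<le> k p then 3 * real j ^ 2 else 0) = 3 * real j ^ 2 * real (card (Lj D (max 2 j)))" .
  qed
  also have "\<dots> \<le> (\<Sum>j\<in>{1..N}. 3 * real j ^ 2 * (800 * real N ^ 4 / real j ^ 3))"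
  proof (intro sum_mono)
    fix j assume "j \<in> {1..N}"
    hence "1 \<le> j" by simp
    thus "3 * real j ^ 2 * real (card (Lj D (max 2 j))) \<le> 3 * real j ^ 2 * (800 * real N ^ 4 / real j ^ 3)"
      using rich2[OF assms(1), of j] N_def by (intro mult_left_mono) auto
  qed
  also have "\<dots> = (\<Sum>j\<in>{1..N}. 2400 * real N ^ 4 * (1 / real j))"
  proof (intro sum.cong refl)
    fix j assume "j \<in> {1..N}"
    hence "real j > 0" by simp
    thus "3 * real j ^ 2 * (800 * real N ^ 4 / real j ^ 3) = 2400 * real N ^ 4 * (1 / real j)"
      by (simp add: field_simps power2_eq_square power3_eq_cube)
  qed
  also have "\<dots> = 2400 * real N ^ 4 * (\<Sum>j\<in>{1..N}. 1 / real j)" by (simp add: sum_distrib_left)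
  also have "\<dots> \<le> 2400 * real N ^ 4 * (1 + ln (real N))"
    using harm_bound0[of N] by (intro mult_left_mono) auto
  finally show ?thesis unfolding L_def k_def N_def .
qed

lemma line_key:
  fixes a c1 c2 a' c1' c2' :: real
  assumes "c1 \<noteq> a" "c2 \<noteq> a" "c1' \<noteq> a'" "c2' \<noteq> a'"
    and eq: "(c1-a)/(c2-a) = (c1'-a')/(c2'-a')"
  defines "s \<equiv> (c2'-a')/(c2-a)"
  defines "b \<equiv> a' - s*a"
  shows "s \<noteq> 0" "s*a+b = a'" "s*c2+b = c2'" "s*c1+b = c1'"
proof -
  have n1: "c2 - a \<noteq> 0" "c2' - a' \<noteq> 0" using assms by auto
  show "s \<noteq> 0" unfolding s_def using n1 by simp
  show "s*a+b = a'" unfolding b_def by simp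
  have "s*(c2-a) = c2'-a'" unfolding s_def using n1 by simp
  thus "s*c2+b = c2'" unfolding b_def by (simp add: algebra_simps)
  have cr: "(c1-a)*(c2'-a') = (c1'-a')*(c2-a)" using eq n1 by (simp add: field_simps)
  have "s*(c1-a) = (c1-a)*(c2'-a')/(c2-a)" unfolding s_def by simp
  also have "\<dots> = (c1'-a')*(c2-a)/(c2-a)" using cr by simp
  also have "\<dots> = c1'-a'" using n1 by simp
  finally have "s*(c1-a) = c1'-a'" .
  thus "s*c1+b = c1'" unfolding b_def by (simp add: algebra_simps)
qed

lemma TT_bound:
  assumes "finite A" "finite C"
  shows "real (card {(t,t'). t \<in> {(a,c1,c2). a\<in>A \<and> c1\<in>C \<and> c2\<in>C \<and> c1\<noteq>a \<and> c2\<noteq>a} \<and>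
                    t' \<in> {(a,c1,c2). a\<in>A \<and> c1\<in>C \<and> c2\<in>C \<and> c1\<noteq>a \<and> c2\<noteq>a} \<and>
                    (case t of (a,c1,c2) \<Rightarrow> (c1-a)/(c2-a)) = (case t' of (a,c1,c2) \<Rightarrow> (c1-a)/(c2-a))})
         \<le> (\<Sum>p\<in>Lj (A\<union>C) 2. real (card (XL (A\<union>C) (fst p) (snd p))) ^ 3)"
proof -
  define D where "D = A \<union> C"
  have finD: "finite D" using assms D_def by simp
  define T3 where "T3 = {(a,c1,c2). a\<in>A \<and> c1\<in>C \<and> c2\<in>C \<and> c1\<noteq>a \<and> c2\<noteq>(a::real)}"
  define psi where "psi = (\<lambda>(a::real,c1::real,c2::real). (c1-a)/(c2-a))"
  define Q where "Q = {(t,t'). t \<in> T3 \<and> t' \<in> T3 \<and> psi t = psi t'}"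
  define L where "L = Lj D 2"
  define X where "X p = XL D (fst p) (snd p)" for p
  define Th where "Th = (\<lambda>((a::real,c1::real,c2::real),(a'::real,c1'::real,c2'::real)).
       (((c2'-a')/(c2-a), a' - (c2'-a')/(c2-a)*a), (a,c2,c1)))"
  have mem: "Th q \<in> Sigma L (\<lambda>p. X p \<times> X p \<times> X p) \<and>
     (case q of ((a,c1,c2),(a',c1',c2')) \<Rightarrow> a' = fst (fst (Th q)) * a + snd (fst (Th q)) \<and>
        c2' = fst (fst (Th q)) * c2 + snd (fst (Th q)) \<and> c1' = fst (fst (Th q)) * c1 + snd (fst (Th q)))"
    if "q \<in> Q" for q
  proof -
    obtain a c1 c2 a' c1' c2' where qq: "q = ((a,c1,c2),(a',c1',c2'))" by (metis prod.collapse)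
    have h: "a\<in>A" "c1\<in>C" "c2\<in>C" "c1\<noteq>a" "c2\<noteq>a" "a'\<in>A" "c1'\<in>C" "c2'\<in>C" "c1'\<noteq>a'" "c2'\<noteq>a'"
      "(c1-a)/(c2-a) = (c1'-a')/(c2'-a')"
      using that unfolding qq Q_def T3_def psi_def by auto
    define s where "s = (c2'-a')/(c2-a)"
    define b where "b = a' - s*a"
    have k: "s \<noteq> 0" "s*a+b = a'" "s*c2+b = c2'" "s*c1+b = c1'"
      using line_key[OF h(4,5,9,10,11)] unfolding s_def b_def by auto
    have Thq: "Th q = ((s,b),(a,c2,c1))" unfolding qq Th_def s_def b_def by simp
    have inX: "a \<in> XL D s b" "c2 \<in> XL D s b" "c1 \<in> XL D s b"
      unfolding XL_def D_def using h k by auto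
    have "2 \<le> card (XL D s b)"
    proof -
      have "{a, c2} \<subseteq> XL D s b" using inX by auto
      hence "card {a, c2} \<le> card (XL D s b)" using finite_XL[OF finD] by (intro card_mono) auto
      thus ?thesis using h(5) by simp
    qed
    hence "(s,b) \<in> L" unfolding L_def Lj_def using k by auto
    hence "Th q \<in> Sigma L (\<lambda>p. X p \<times> X p \<times> X p)" unfolding Thq X_def using inX by auto
    thus ?thesis unfolding Thq using k unfolding qq by auto
  qed
  have inj: "inj_on Th Q"
  proof (rule inj_onI)
    fix q q' assume q: "q \<in> Q" "q' \<in> Q" "Th q = Th q'"
    obtain a c1 c2 a' c1' c2' where qq: "q = ((a,c1,c2),(a',c1',c2'))" by (metis prod.collapse)
    obtain e1 e2 e3 e4 e5 e6 where qq': "q' = ((e1,e2,e3),(e4,e5,e6))" by (metis prod.collapse)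
    have m1: "a' = fst (fst (Th q)) * a + snd (fst (Th q))" "c2' = fst (fst (Th q)) * c2 + snd (fst (Th q))"
       "c1' = fst (fst (Th q)) * c1 + snd (fst (Th q))" using conjunct2[OF mem[OF q(1)]] unfolding qq by auto
    have m2: "e4 = fst (fst (Th q')) * e1 + snd (fst (Th q'))" "e6 = fst (fst (Th q')) * e3 + snd (fst (Th q'))"
       "e5 = fst (fst (Th q')) * e2 + snd (fst (Th q'))" using conjunct2[OF mem[OF q(2)]] unfolding qq' by auto
    have "snd (Th q) = snd (Th q')" using q(3) by simp
    hence "a = e1" "c2 = e3" "c1 = e2" unfolding qq qq' Th_def by auto
    thus "q = q'" using m1 m2 q(3) unfolding qq qq' by simp
  qed
  have finL: "finite L" using lines_fin(1)[OF finD] L_def by simp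
  have finX: "finite (X p)" for p using finite_XL[OF finD] X_def by simp
  have "card Q = card (Th ` Q)" using inj by (simp add: card_image)
  also have "\<dots> \<le> card (Sigma L (\<lambda>p. X p \<times> X p \<times> X p))"
  proof (intro card_mono)
    show "finite (Sigma L (\<lambda>p. X p \<times> X p \<times> X p))" using finL finX by auto
    show "Th ` Q \<subseteq> Sigma L (\<lambda>p. X p \<times> X p \<times> X p)" using mem by blast
  qed
  also have "\<dots> = (\<Sum>p\<in>L. card (X p \<times> X p \<times> X p))" using finL finX by (intro card_SigmaI) auto
  also have "\<dots> = (\<Sum>p\<in>L. card (X p) ^ 3)" by (simp add: card_cartesian_product power3_eq_cube mult.assoc)
  finally have "real (card Q) \<le> real (\<Sum>p\<in>L. card (X p) ^ 3)" by linarith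
  also have "\<dots> = (\<Sum>p\<in>L. real (card (X p)) ^ 3)" by simp
  finally show ?thesis unfolding Q_def T3_def psi_def L_def X_def D_def .
qed

lemma cs_count:
  fixes phi :: "'a \<Rightarrow> 'c" and psi :: "'b \<Rightarrow> 'c"
  assumes "finite S" "finite T"
  shows "real (card {(p,t). p\<in>S \<and> t\<in>T \<and> phi p = psi t})
     \<le> sqrt (real (card {(p,p'). p\<in>S \<and> p'\<in>S \<and> phi p = phi p'})) *
        sqrt (real (card {(t,t'). t\<in>T \<and> t'\<in>T \<and> psi t = psi t'}))"
proof -
  define V where "V = phi ` S"
  define Sv where "Sv v = {p\<in>S. phi p = v}" for v
  define Tv where "Tv v = {t\<in>T. psi t = v}" for v
  have finV: "finite V" using assms V_def by simp
  have finSv: "finite (Sv v)" for v using assms Sv_def by simp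
  have finTv: "finite (Tv v)" for v using assms Tv_def by simp
  have e1: "{(p,t). p\<in>S \<and> t\<in>T \<and> phi p = psi t} = (\<Union>v\<in>V. Sv v \<times> Tv v)"
    unfolding V_def Sv_def Tv_def by auto
  have e2: "{(p,p'). p\<in>S \<and> p'\<in>S \<and> phi p = phi p'} = (\<Union>v\<in>V. Sv v \<times> Sv v)"
    unfolding V_def Sv_def by auto
  have s3: "(\<Union>v\<in>V. Tv v \<times> Tv v) \<subseteq> {(t,t'). t\<in>T \<and> t'\<in>T \<and> psi t = psi t'}"
    unfolding Tv_def by auto
  have c1: "card (\<Union>v\<in>V. Sv v \<times> Tv v) = (\<Sum>v\<in>V. card (Sv v) * card (Tv v))"
    using finV finSv finTv by (subst card_UN_disjoint) (auto simp: Sv_def Tv_def card_cartesian_product)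
  have c2: "card (\<Union>v\<in>V. Sv v \<times> Sv v) = (\<Sum>v\<in>V. card (Sv v) ^ 2)"
    using finV finSv by (subst card_UN_disjoint) (auto simp: Sv_def card_cartesian_product power2_eq_square)
  have c3: "card (\<Union>v\<in>V. Tv v \<times> Tv v) = (\<Sum>v\<in>V. card (Tv v) ^ 2)"
    using finV finTv by (subst card_UN_disjoint) (auto simp: Tv_def card_cartesian_product power2_eq_square)
  have finTT: "finite {(t,t'). t\<in>T \<and> t'\<in>T \<and> psi t = psi t'}"
    by (rule finite_subset[of _ "T \<times> T"]) (use assms in auto)
  have c3': "(\<Sum>v\<in>V. card (Tv v) ^ 2) \<le> card {(t,t'). t\<in>T \<and> t'\<in>T \<and> psi t = psi t'}"
    using card_mono[OF finTT s3] c3 by simp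
  define x where "x v = real (card (Sv v))" for v
  define y where "y v = real (card (Tv v))" for v
  have CS: "(\<Sum>v\<in>V. x v * y v)^2 \<le> (\<Sum>v\<in>V. (x v)^2) * (\<Sum>v\<in>V. (y v)^2)"
    by (rule Cauchy_Schwarz_ineq_sum)
  have nn: "0 \<le> (\<Sum>v\<in>V. x v * y v)" unfolding x_def y_def by (intro sum_nonneg) auto
  have "(\<Sum>v\<in>V. x v * y v) = sqrt ((\<Sum>v\<in>V. x v * y v)^2)" using nn by simp
  also have "\<dots> \<le> sqrt ((\<Sum>v\<in>V. (x v)^2) * (\<Sum>v\<in>V. (y v)^2))" using CS by (rule real_sqrt_le_mono)
  also have "\<dots> = sqrt (\<Sum>v\<in>V. (x v)^2) * sqrt (\<Sum>v\<in>V. (y v)^2)" by (rule real_sqrt_mult)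
  finally have main: "(\<Sum>v\<in>V. x v * y v) \<le> sqrt (\<Sum>v\<in>V. (x v)^2) * sqrt (\<Sum>v\<in>V. (y v)^2)" .
  have l: "real (card {(p,t). p\<in>S \<and> t\<in>T \<and> phi p = psi t}) = (\<Sum>v\<in>V. x v * y v)"
    unfolding e1 c1 x_def y_def by simp
  have r1: "(\<Sum>v\<in>V. (x v)^2) = real (card {(p,p'). p\<in>S \<and> p'\<in>S \<and> phi p = phi p'})"
    unfolding e2 c2 x_def by simp
  have r2: "(\<Sum>v\<in>V. (y v)^2) \<le> real (card {(t,t'). t\<in>T \<and> t'\<in>T \<and> psi t = psi t'})"
  proof -
    have "(\<Sum>v\<in>V. (y v)^2) = real (\<Sum>v\<in>V. card (Tv v) ^ 2)" unfolding y_def by simp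
    also have "\<dots> \<le> real (card {(t,t'). t\<in>T \<and> t'\<in>T \<and> psi t = psi t'})" using c3' by linarith
    finally show ?thesis .
  qed
  have "sqrt (\<Sum>v\<in>V. (y v)^2) \<le> sqrt (real (card {(t,t'). t\<in>T \<and> t'\<in>T \<and> psi t = psi t'}))"
    using r2 by (rule real_sqrt_le_mono)
  hence "sqrt (\<Sum>v\<in>V. (x v)^2) * sqrt (\<Sum>v\<in>V. (y v)^2)
     \<le> sqrt (\<Sum>v\<in>V. (x v)^2) * sqrt (real (card {(t,t'). t\<in>T \<and> t'\<in>T \<and> psi t = psi t'}))"
    by (intro mult_left_mono) (auto intro: sum_nonneg)
  thus ?thesis using main l r1 by simp
qed

lemma energy_shift:
  fixes a :: real
  shows "mult_energy B ((\<lambda>c. c-a)`C) = card {(x1,x2,c1,c2). x1\<in>B \<and> x2\<in>B \<and> c1\<in>C \<and> c2\<in>C \<and> c1\<noteq>a \<and> c2\<noteq>a \<and> x1/(c1-a) = x2/(c2-a)}"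
proof -
  define Wa where "Wa = {(x1,x2,c1,c2). x1\<in>B \<and> x2\<in>B \<and> c1\<in>C \<and> c2\<in>C \<and> c1\<noteq>a \<and> c2\<noteq>a \<and> x1/(c1-a) = x2/(c2-a)}"
  define f where "f = (\<lambda>(x1::real,x2::real,c1::real,c2::real). (x1,x2,c1-a,c2-a))"
  have inj: "inj_on f Wa" unfolding f_def by (rule inj_onI) auto
  have eq: "{(x1, x2, y1, y2). x1 \<in> B \<and> x2 \<in> B \<and> y1 \<in> (\<lambda>c. c-a)`C \<and> y2 \<in> (\<lambda>c. c-a)`C
      \<and> y1 \<noteq> 0 \<and> y2 \<noteq> 0 \<and> x1 / y1 = x2 / y2} = f ` Wa"
  proof (rule set_eqI, rule iffI)
    fix q assume "q \<in> {(x1, x2, y1, y2). x1 \<in> B \<and> x2 \<in> B \<and> y1 \<in> (\<lambda>c. c-a)`C \<and> y2 \<in> (\<lambda>c. c-a)`C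
      \<and> y1 \<noteq> 0 \<and> y2 \<noteq> 0 \<and> x1 / y1 = x2 / y2}"
    then obtain x1 x2 c1 c2 where h: "q = (x1,x2,c1-a,c2-a)" "x1\<in>B" "x2\<in>B" "c1\<in>C" "c2\<in>C"
      "c1 - a \<noteq> 0" "c2 - a \<noteq> 0" "x1/(c1-a) = x2/(c2-a)" by auto
    have "(x1,x2,c1,c2) \<in> Wa" using h unfolding Wa_def by auto
    moreover have "q = f (x1,x2,c1,c2)" using h f_def by simp
    ultimately show "q \<in> f ` Wa" by blast
  next
    fix q assume "q \<in> f ` Wa"
    then obtain x1 x2 c1 c2 where h: "q = f (x1,x2,c1,c2)" "(x1,x2,c1,c2) \<in> Wa" by auto
    thus "q \<in> {(x1, x2, y1, y2). x1 \<in> B \<and> x2 \<in> B \<and> y1 \<in> (\<lambda>c. c-a)`C \<and> y2 \<in> (\<lambda>c. c-a)`C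
      \<and> y1 \<noteq> 0 \<and> y2 \<noteq> 0 \<and> x1 / y1 = x2 / y2}" unfolding f_def Wa_def by auto
  qed
  show ?thesis unfolding mult_energy_def eq using inj Wa_def by (simp add: card_image)
qed

lemma W_bounds:
  fixes A B C :: "real set"
  assumes fA: "finite A" and fB: "finite B" and fC: "finite C"
  defines "Wa \<equiv> \<lambda>a. {(x1,x2,c1,c2). x1\<in>B \<and> x2\<in>B \<and> c1\<in>C \<and> c2\<in>C \<and> c1\<noteq>a \<and> c2\<noteq>a \<and> x1/(c1-a) = x2/(c2-a)}"
  shows "(\<Sum>a\<in>A. real (mult_energy B ((\<lambda>c. c-a)`C)))
      \<le> real (card A) * real (card C)^2 + sqrt (real (mult_energy B B)) *
         sqrt (\<Sum>p\<in>Lj (A\<union>C) 2. real (card (XL (A\<union>C) (fst p) (snd p))) ^ 3)"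
    and "(\<Sum>a\<in>A. real (mult_energy B ((\<lambda>c. c-a)`C))) \<le> real (card A) * real (card B)^2 * real (card C)^2"
proof -
  have finWa: "finite (Wa a)" for a
    by (rule finite_subset[of _ "B \<times> B \<times> C \<times> C"]) (use fB fC in \<open>auto simp: Wa_def\<close>)
  have sumeq: "(\<Sum>a\<in>A. real (mult_energy B ((\<lambda>c. c-a)`C))) = real (card (Sigma A Wa))"
  proof -
    have "(\<Sum>a\<in>A. real (mult_energy B ((\<lambda>c. c-a)`C))) = real (\<Sum>a\<in>A. card (Wa a))"
      unfolding Wa_def energy_shift by simp
    also have "(\<Sum>a\<in>A. card (Wa a)) = card (Sigma A Wa)" using fA finWa by (intro card_SigmaI[symmetric]) auto
    finally show ?thesis .
  qed
  show "(\<Sum>a\<in>A. real (mult_energy B ((\<lambda>c. c-a)`C))) \<le> real (card A) * real (card B)^2 * real (card C)^2"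
  proof -
    have "Sigma A Wa \<subseteq> A \<times> (B \<times> B \<times> C \<times> C)" unfolding Wa_def by auto
    hence "card (Sigma A Wa) \<le> card (A \<times> (B \<times> B \<times> C \<times> C))" using fA fB fC by (intro card_mono) auto
    also have "\<dots> = card A * (card B * card B * (card C * card C))" by (simp add: card_cartesian_product)
    finally have "real (card (Sigma A Wa)) \<le> real (card A * (card B * card B * (card C * card C)))" by linarith
    thus ?thesis unfolding sumeq by (simp add: power2_eq_square mult.assoc)
  qed
  define W where "W = Sigma A Wa"
  define W0 where "W0 = {q\<in>W. fst (snd q) = 0}"
  define W1 where "W1 = {q\<in>W. fst (snd q) \<noteq> 0}"
  have finW: "finite W" unfolding W_def using fA finWa by auto
  have cW: "card W \<le> card W0 + card W1"
  proof -
    have "W = W0 \<union> W1" unfolding W0_def W1_def by auto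
    thus ?thesis using card_Un_le[of W0 W1] by simp
  qed
  have cW0: "card W0 \<le> card A * card C * card C"
  proof -
    have "W0 \<subseteq> (\<lambda>(a,c1,c2). (a,(0::real,0::real,c1,c2))) ` (A \<times> C \<times> C)"
    proof
      fix q assume q: "q \<in> W0"
      then obtain a x1 x2 c1 c2 where qq: "q = (a,(x1,x2,c1,c2))" by (metis prod.collapse)
      have h: "a \<in> A" "c1 \<in> C" "c2 \<in> C" "c2 \<noteq> a" "x1 = 0" "x1/(c1-a) = x2/(c2-a)"
        using q unfolding qq W0_def W_def Wa_def by auto
      hence "x2 = 0" by simp
      hence "q = (\<lambda>(a,c1,c2). (a,(0::real,0::real,c1,c2))) (a,c1,c2)" using h qq by simp
      moreover have "(a,c1,c2) \<in> A \<times> C \<times> C" using h by simp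
      ultimately show "q \<in> (\<lambda>(a,c1,c2). (a,(0::real,0::real,c1,c2))) ` (A \<times> C \<times> C)"
        by (rule image_eqI)
    qed
    hence "card W0 \<le> card ((\<lambda>(a,c1,c2). (a,(0::real,0::real,c1,c2))) ` (A \<times> C \<times> C))"
      using fA fC by (intro card_mono) auto
    also have "\<dots> \<le> card (A \<times> C \<times> C)" by (rule card_image_le) (use fA fC in auto)
    finally show ?thesis by (simp add: card_cartesian_product)
  qed
  define S where "S = (B - {0}) \<times> (B - {0})"
  define T3 where "T3 = {(a,c1,c2). a\<in>A \<and> c1\<in>C \<and> c2\<in>C \<and> c1\<noteq>a \<and> c2\<noteq>(a::real)}"
  define phi where "phi = (\<lambda>(x1::real,x2::real). x1/x2)"
  define psi where "psi = (\<lambda>(a::real,c1::real,c2::real). (c1-a)/(c2-a))"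
  have finS: "finite S" unfolding S_def using fB by auto
  have finT: "finite T3" by (rule finite_subset[of _ "A \<times> C \<times> C"]) (use fA fC in \<open>auto simp: T3_def\<close>)
  define M where "M = {(p,t). p\<in>S \<and> t\<in>T3 \<and> phi p = psi t}"
  have cW1: "card W1 \<le> card M"
  proof -
    define h where "h = (\<lambda>(a::real,(x1::real,x2::real,c1::real,c2::real)). ((x1,x2),(a,c1,c2)))"
    have inj: "inj_on h W1" unfolding h_def by (rule inj_onI) auto
    have sub: "h ` W1 \<subseteq> M"
    proof
      fix r assume "r \<in> h ` W1"
      then obtain q where q: "q \<in> W1" "r = h q" by auto
      obtain a x1 x2 c1 c2 where qq: "q = (a,(x1,x2,c1,c2))" by (metis prod.collapse)
      have r: "r = h (a,(x1,x2,c1,c2))" "(a,(x1,x2,c1,c2)) \<in> W1" using q qq by auto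
      have hh: "a \<in> A" "c1 \<in> C" "c2 \<in> C" "c1 \<noteq> a" "c2 \<noteq> a" "x1 \<noteq> 0" "x1 \<in> B" "x2 \<in> B"
        "x1/(c1-a) = x2/(c2-a)"
        using r(2) unfolding W1_def W_def Wa_def by auto
      have n: "c1 - a \<noteq> 0" "c2 - a \<noteq> 0" using hh by auto
      have nz: "x1/(c1-a) \<noteq> 0" using hh(6) n by simp
      have x2: "x2 \<noteq> 0"
      proof
        assume "x2 = 0"
        hence "x1/(c1-a) = 0" using hh(9) by simp
        thus False using nz by simp
      qed
      have "x1/x2 = (c1-a)/(c2-a)" using hh(9) n x2 hh(6) by (simp add: field_simps)
      thus "r \<in> M" unfolding r(1) h_def M_def S_def T3_def phi_def psi_def using hh x2 by auto
    qed
    have finM: "finite M" by (rule finite_subset[of _ "S \<times> T3"]) (use finS finT in \<open>auto simp: M_def\<close>)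
    have "card W1 = card (h ` W1)" using inj by (simp add: card_image)
    also have "\<dots> \<le> card M" using sub finM by (intro card_mono)
    finally show ?thesis .
  qed
  have cS: "card {(p,p'). p\<in>S \<and> p'\<in>S \<and> phi p = phi p'} \<le> mult_energy B B"
  proof -
    define E where "E = {(x1, x2, y1, y2). x1 \<in> B \<and> x2 \<in> B \<and> y1 \<in> B \<and> y2 \<in> B \<and> y1 \<noteq> 0 \<and> y2 \<noteq> 0 \<and> x1 / y1 = x2 / y2}"
    define h where "h = (\<lambda>((x1::real,x2::real),(x3::real,x4::real)). (x1,x3,x2,x4))"
    have inj: "inj_on h {(p,p'). p\<in>S \<and> p'\<in>S \<and> phi p = phi p'}" unfolding h_def by (rule inj_onI) auto
    have sub: "h ` {(p,p'). p\<in>S \<and> p'\<in>S \<and> phi p = phi p'} \<subseteq> E"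
      unfolding h_def E_def S_def phi_def by auto
    have finE: "finite E" by (rule finite_subset[of _ "B \<times> B \<times> B \<times> B"]) (use fB in \<open>auto simp: E_def\<close>)
    have "card {(p,p'). p\<in>S \<and> p'\<in>S \<and> phi p = phi p'} = card (h ` {(p,p'). p\<in>S \<and> p'\<in>S \<and> phi p = phi p'})"
      using inj by (simp add: card_image)
    also have "\<dots> \<le> card E" using sub finE by (intro card_mono)
    finally show ?thesis unfolding mult_energy_def E_def .
  qed
  have TT: "real (card {(t,t'). t\<in>T3 \<and> t'\<in>T3 \<and> psi t = psi t'})
      \<le> (\<Sum>p\<in>Lj (A\<union>C) 2. real (card (XL (A\<union>C) (fst p) (snd p))) ^ 3)"
    using TT_bound[OF fA fC] unfolding T3_def psi_def by simp
  have "real (card M) \<le> sqrt (real (card {(p,p'). p\<in>S \<and> p'\<in>S \<and> phi p = phi p'})) *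
        sqrt (real (card {(t,t'). t\<in>T3 \<and> t'\<in>T3 \<and> psi t = psi t'}))"
    unfolding M_def by (rule cs_count[OF finS finT])
  also have "\<dots> \<le> sqrt (real (mult_energy B B)) *
        sqrt (\<Sum>p\<in>Lj (A\<union>C) 2. real (card (XL (A\<union>C) (fst p) (snd p))) ^ 3)"
    using cS TT by (intro mult_mono real_sqrt_le_mono) auto
  finally have cM: "real (card M) \<le> sqrt (real (mult_energy B B)) *
        sqrt (\<Sum>p\<in>Lj (A\<union>C) 2. real (card (XL (A\<union>C) (fst p) (snd p))) ^ 3)" .
  have "real (card W) \<le> real (card W0) + real (card W1)" using cW by linarith
  also have "\<dots> \<le> real (card A) * real (card C)^2 + real (card M)"
  proof -
    have "real (card W0) \<le> real (card A * card C * card C)" using cW0 by (simp only: of_nat_le_iff)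
    also have "\<dots> = real (card A) * real (card C)^2" by (simp add: power2_eq_square)
    finally have a1: "real (card W0) \<le> real (card A) * real (card C)^2" .
    have a2: "real (card W1) \<le> real (card M)" using cW1 by (simp only: of_nat_le_iff)
    show ?thesis using a1 a2 by linarith
  qed
  finally have fW: "real (card (Sigma A Wa)) \<le> real (card A) * real (card C)^2 + real (card M)"
    unfolding W_def .
  show "(\<Sum>a\<in>A. real (mult_energy B ((\<lambda>c. c-a)`C)))
      \<le> real (card A) * real (card C)^2 + sqrt (real (mult_energy B B)) *
         sqrt (\<Sum>p\<in>Lj (A\<union>C) 2. real (card (XL (A\<union>C) (fst p) (snd p))) ^ 3)"
    using fW cM sumeq by linarith
qed

lemma log_part:
  fixes c2 :: real and n N :: nat
  assumes c2: "c2 > 0" and n2: "2 \<le> n" and NN: "real N \<le> (1 + c2) * real n" and Nn: "n \<le> N"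
  shows "2400 * real N ^ 4 * (1 + ln (real N)) \<le> (2400 * (1 + c2)^4 * (2 + ln (1 + c2))) * real n ^ 4 * log 2 (real n)"
proof -
  have npos: "real n > 0" using n2 by simp
  have Npos: "real N > 0" using n2 Nn by simp
  have lg1: "1 \<le> log 2 (real n)" using n2 by simp
  have lnN: "ln (real N) \<le> ln (1 + c2) + ln (real n)"
  proof -
    have "ln (real N) \<le> ln ((1 + c2) * real n)" using NN Npos by simp
    also have "\<dots> = ln (1 + c2) + ln (real n)" using c2 npos by (simp add: ln_mult)
    finally show ?thesis .
  qed
  have lnn: "ln (real n) \<le> log 2 (real n)"
  proof -
    have "ln (real n) = log 2 (real n) * ln 2" using npos by (simp add: log_def)
    also have "\<dots> \<le> log 2 (real n) * 1" using lg1 ln_2_less_1 by (intro mult_left_mono) auto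
    finally show ?thesis by simp
  qed
  have lc: "0 \<le> ln (1 + c2)" using c2 by simp
  have "1 + ln (real N) \<le> (1 + ln (1 + c2)) + log 2 (real n)" using lnN lnn by linarith
  also have "\<dots> \<le> (1 + ln (1 + c2)) * log 2 (real n) + log 2 (real n)"
  proof -
    have "(1 + ln (1 + c2)) * 1 \<le> (1 + ln (1 + c2)) * log 2 (real n)"
      using lg1 lc by (intro mult_left_mono) auto
    hence "1 + ln (1 + c2) \<le> (1 + ln (1 + c2)) * log 2 (real n)" by simp
    thus ?thesis by linarith
  qed
  also have "\<dots> = (2 + ln (1 + c2)) * log 2 (real n)" by (simp add: algebra_simps)
  finally have l: "1 + ln (real N) \<le> (2 + ln (1 + c2)) * log 2 (real n)" .
  have p: "real N ^ 4 \<le> ((1 + c2) * real n) ^ 4" using NN by (intro power_mono) auto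
  have l0: "0 \<le> 1 + ln (real N)" using Npos n2 Nn by simp
  have "2400 * real N ^ 4 * (1 + ln (real N)) \<le> 2400 * ((1 + c2) * real n) ^ 4 * ((2 + ln (1 + c2)) * log 2 (real n))"
    using p l l0 by (intro mult_mono) auto
  also have "\<dots> = (2400 * (1 + c2)^4 * (2 + ln (1 + c2))) * real n ^ 4 * log 2 (real n)"
    unfolding power_mult_distrib by (simp add: ac_simps)
  finally show ?thesis .
qed

theorem lemma3p1:
  fixes c1 c2 :: real
  assumes "c1 > 0" and "c2 > 0"
  shows "\<exists>K>0. \<forall>A B C :: real set.
     finite A \<and> finite B \<and> finite C \<and>
     real (card A) \<le> c1 * real (card C) \<and> real (card C) \<le> c2 * real (card A) \<longrightarrow>
     (\<Sum>a\<in>A. real (mult_energy B ((\<lambda>c. c - a) ` C)))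
       \<le> K * (sqrt (real (mult_energy B B)) * real (card A) ^ 2 * sqrt (log 2 (real (card A)))
              + real (card A) ^ 3 + real (card A) * real (card B) ^ 2)"
proof -
  define K2 where "K2 = 2400 * (1 + c2)^4 * (2 + ln (1 + c2))"
  define K where "K = c2^2 + sqrt K2 + 1"
  have c2: "c2 > 0" by fact
  have K2pos: "K2 \<ge> 0" unfolding K2_def using c2 by (intro mult_nonneg_nonneg) auto
  have Kpos: "K > 0" unfolding K_def using K2pos by (simp add: add_nonneg_pos)
  have Kc: "c2^2 \<le> K" "sqrt K2 \<le> K" unfolding K_def using K2pos by auto
  show ?thesis
  proof (intro exI[of _ K] conjI allI impI Kpos)
    fix A B C :: "real set"
    assume h: "finite A \<and> finite B \<and> finite C \<and> real (card A) \<le> c1 * real (card C) \<and> real (card C) \<le> c2 * real (card A)"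
    hence fA: "finite A" and fB: "finite B" and fC: "finite C" and mC: "real (card C) \<le> c2 * real (card A)" by auto
    define n where "n = real (card A)"
    define m where "m = real (card C)"
    define be where "be = real (card B)"
    define E where "E = real (mult_energy B B)"
    define LHS where "LHS = (\<Sum>a\<in>A. real (mult_energy B ((\<lambda>c. c - a) ` C)))"
    have n0: "0 \<le> n" "0 \<le> m" "0 \<le> be" "0 \<le> E" unfolding n_def m_def be_def E_def by auto
    have mC': "m \<le> c2 * n" using mC unfolding m_def n_def .
    have m2: "m^2 \<le> c2^2 * n^2"
    proof -
      have "m^2 \<le> (c2 * n)^2" using mC' n0 by (intro power_mono) auto
      thus ?thesis by (simp add: power_mult_distrib)
    qed
    show "LHS \<le> K * (sqrt E * n ^ 2 * sqrt (log 2 n) + n ^ 3 + n * be ^ 2)"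
      unfolding LHS_def n_def E_def be_def
    proof (cases "card A \<le> 1")
      case True
      hence nle: "n \<le> 1" unfolding n_def by simp
      have lgnn: "0 \<le> sqrt E * n ^ 2 * sqrt (log 2 n)"
      proof (cases "card A = 0")
        case True thus ?thesis unfolding n_def by simp
      next
        case False hence "card A = 1" using \<open>card A \<le> 1\<close> by simp
        thus ?thesis unfolding n_def by simp
      qed
      have "LHS \<le> n * be^2 * m^2" using W_bounds(2)[OF fA fB fC] unfolding LHS_def n_def be_def m_def .
      also have "\<dots> \<le> n * be^2 * (c2^2 * n^2)" using m2 n0 by (intro mult_left_mono) auto
      also have "\<dots> \<le> n * be^2 * c2^2"
      proof -
        have "n^2 \<le> 1" using nle n0 by (simp add: power_le_one)
        hence "c2^2 * n^2 \<le> c2^2" by (simp add: mult_left_le)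
        thus ?thesis using n0 by (intro mult_left_mono) auto
      qed
      also have "\<dots> = c2^2 * (n * be^2)" by simp
      also have "\<dots> \<le> K * (n * be^2)" using Kc n0 by (intro mult_right_mono) auto
      also have "\<dots> \<le> K * (sqrt E * n ^ 2 * sqrt (log 2 n) + n ^ 3 + n * be ^ 2)"
        using Kpos lgnn n0 by (intro mult_left_mono) auto
      finally show "(\<Sum>a\<in>A. real (mult_energy B ((\<lambda>c. c - a) ` C)))
         \<le> K * (sqrt (real (mult_energy B B)) * real (card A) ^ 2 * sqrt (log 2 (real (card A))) +
            real (card A) ^ 3 + real (card A) * real (card B) ^ 2)"
        unfolding LHS_def n_def E_def be_def .
    next
      case False
      hence n2: "2 \<le> card A" by simp
      define N where "N = card (A \<union> C)"
      have Nle: "N \<le> card A + card C" unfolding N_def by (rule card_Un_le)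
      have NN: "real N \<le> (1 + c2) * real (card A)" using Nle mC by (simp add: algebra_simps)
      have Nn: "card A \<le> N" unfolding N_def using fA fC by (intro card_mono) auto
      define S3 where "S3 = (\<Sum>p\<in>Lj (A\<union>C) 2. real (card (XL (A\<union>C) (fst p) (snd p))) ^ 3)"
      have S3b: "S3 \<le> K2 * n ^ 4 * log 2 n"
        using sum_cubes[of "A \<union> C"] log_part[OF c2 n2 NN Nn] fA fC
        unfolding S3_def K2_def n_def N_def by simp
      have lg0: "0 \<le> log 2 n" using n2 unfolding n_def by simp
      have sS3: "sqrt S3 \<le> sqrt K2 * n^2 * sqrt (log 2 n)"
      proof -
        have "sqrt S3 \<le> sqrt (K2 * n ^ 4 * log 2 n)" using S3b by (rule real_sqrt_le_mono)
        also have "\<dots> = sqrt K2 * sqrt (n ^ 4) * sqrt (log 2 n)" by (simp add: real_sqrt_mult)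
        also have "sqrt (n ^ 4) = n^2"
        proof -
          have e4: "n^4 = (n^2)^2" by (simp add: power_mult[symmetric])
          have "sqrt (n^4) = \<bar>n^2\<bar>" unfolding e4 by (rule real_sqrt_abs)
          thus ?thesis by simp
        qed
        finally show ?thesis .
      qed
      have "LHS \<le> n * m^2 + sqrt E * sqrt S3"
        using W_bounds(1)[OF fA fB fC] unfolding LHS_def n_def m_def E_def S3_def .
      also have "\<dots> \<le> n * (c2^2 * n^2) + sqrt E * (sqrt K2 * n^2 * sqrt (log 2 n))"
        using m2 sS3 n0 by (intro add_mono mult_left_mono) auto
      also have "\<dots> = c2^2 * n^3 + sqrt K2 * (sqrt E * n^2 * sqrt (log 2 n))"
        by (simp add: power2_eq_square power3_eq_cube algebra_simps)
      also have "\<dots> \<le> K * n^3 + K * (sqrt E * n^2 * sqrt (log 2 n))"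
        using Kc n0 lg0 by (intro add_mono mult_right_mono) auto
      also have "\<dots> \<le> K * (sqrt E * n ^ 2 * sqrt (log 2 n) + n ^ 3 + n * be ^ 2)"
        using Kpos n0 by (simp add: algebra_simps)
      finally show "(\<Sum>a\<in>A. real (mult_energy B ((\<lambda>c. c - a) ` C)))
         \<le> K * (sqrt (real (mult_energy B B)) * real (card A) ^ 2 * sqrt (log 2 (real (card A))) +
            real (card A) ^ 3 + real (card A) * real (card B) ^ 2)"
        unfolding LHS_def n_def E_def be_def .
    qed
  qed
qed

end
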